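(* Fix $d\in\mathbb N$. Let $(g_{ij})_{i,j\in\mathbb N}$ be an infinite array of independent standard Gaussian random variables, and for each $n\ge d$ let $G=G_n=(g_{ij})_{i\le d,\,j\le n}$ be the $d\times n$ matrix (viewed as a linear map $\mathbb R^n\to\mathbb R^d$) and $I^*=I_n^*=(GG^* )^{-1/2}G:\mathbb R^n\to\mathbb R^d$. Then, almost surely, $$\mathrm{d}_H\Big(\tfrac{1}{\sqrt n}\,I^*([-1,1]^n),\ \mathbb B_2^d\big(0,\sqrt{2/\pi}\big)\Big)\longrightarrow 0\quad\text{as } n\to\infty.$$
   Context: $G^*$ denotes the transpose of $G$, and $(GG^* )^{-1/2}$ is the inverse of the positive definite square root of $GG^*$ (which is almost surely invertible). $\mathbb B_2^d(0,r)$ is the closed Euclidean ball in $\mathbb R^d$ centered at $0$ with radius $r$. For compact sets $A,B\subseteq\mathbb R^d$, the Hausdorff distance is $\mathrm{d}_H(A,B)=\max\{\inf\{r\ge0: A\subseteq B+\mathbb B_2^d(0,r)\},\ \inf\{r\ge0: B\subseteq A+\mathbb B_2^d(0,r)\}\}$, where $+$ denotes Minkowski sum. *)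

theory Defs
  imports "HOL-Probability.Probability"
begin

definition ball_thicken :: "'a::real_normed_vector set \<Rightarrow> real \<Rightarrow> 'a set" where
  "ball_thicken B r = {b + e | b e. b \<in> B \<and> e \<in> cball 0 r}"

definition hausdorff_dist :: "'a::real_normed_vector set \<Rightarrow> 'a set \<Rightarrow> real" where
  "hausdorff_dist A B =
     max (Inf {r. r \<ge> 0 \<and> A \<subseteq> ball_thicken B r}) (Inf {r. r \<ge> 0 \<and> B \<subseteq> ball_thicken A r})"

definition pos_def_mat :: "real^'d^'d \<Rightarrow> bool" where
  "pos_def_mat R \<longleftrightarrow> transpose R = R \<and> (\<forall>x. x \<noteq> 0 \<longrightarrow> x \<bullet> (R *v x) > 0)"

definition pd_sqrt :: "real^'d^'d \<Rightarrow> real^'d^'d" where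
  "pd_sqrt A = (THE R. pos_def_mat R \<and> R ** R = A)"

text \<open>The d x n Gaussian matrix G_n (rows indexed by the finite type 'd, d = CARD('d)),
  as a linear map R^n -> R^d, where vectors of R^n are functions nat => real
  (only coordinates j < n matter).\<close>
definition G_map :: "('d \<Rightarrow> nat \<Rightarrow> 'w \<Rightarrow> real) \<Rightarrow> nat \<Rightarrow> 'w \<Rightarrow> (nat \<Rightarrow> real) \<Rightarrow> real^'d" where
  "G_map g n \<omega> x = (\<chi> i. \<Sum>j<n. g i j \<omega> * x j)"

definition GGt :: "('d \<Rightarrow> nat \<Rightarrow> 'w \<Rightarrow> real) \<Rightarrow> nat \<Rightarrow> 'w \<Rightarrow> real^'d^'d" where
  "GGt g n \<omega> = (\<chi> i k. \<Sum>j<n. g i j \<omega> * g k j \<omega>)"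

definition I_star :: "('d \<Rightarrow> nat \<Rightarrow> 'w \<Rightarrow> real) \<Rightarrow> nat \<Rightarrow> 'w \<Rightarrow> (nat \<Rightarrow> real) \<Rightarrow> real^'d" where
  "I_star g n \<omega> x = matrix_inv (pd_sqrt (GGt g n \<omega>)) *v G_map g n \<omega> x"

definition cube :: "nat \<Rightarrow> (nat \<Rightarrow> real) set" where
  "cube n = {x. (\<forall>j<n. \<bar>x j\<bar> \<le> 1) \<and> (\<forall>j\<ge>n. x j = 0)}"

end

theory Submission
  imports Defs "HOL-Library.Discrete_Functions" "HOL-Real_Asymp.Real_Asymp"
begin

lemma filterlim_floor_sqrt: "filterlim floor_sqrt at_top sequentially"
unfolding filterlim_at_top
proof (rule allI)
  fix Z :: nat
  show "eventually (\<lambda>n. Z \<le> floor_sqrt n) sequentially"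
    using eventually_ge_at_top[of "Z^2"] by eventually_elim (simp add: le_floor_sqrt_iff)
qed

lemma sandwich_sq:
  fixes a :: "nat \<Rightarrow> real"
  assumes nn: "\<And>j. 0 \<le> a j"
    and lim: "(\<lambda>k. (\<Sum>j<(k+1)^2. a j) / real ((k+1)^2)) \<longlonglongrightarrow> \<mu>"
  shows "(\<lambda>n. (\<Sum>j<n. a j) / real n) \<longlonglongrightarrow> \<mu>"
proof -
  define S where "S n = (\<Sum>j<n. a j)" for n
  define u where "u k = S ((k+1)^2) / real ((k+1)^2)" for k
  define r where "r n = floor_sqrt n" for n
  have Smono: "S m \<le> S n" if "m \<le> n" for m n
    unfolding S_def using that by (intro sum_mono2) (auto simp: nn)
  have r_at: "filterlim r at_top sequentially"
    unfolding r_def by (rule filterlim_floor_sqrt)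
  have u_lim: "u \<longlonglongrightarrow> \<mu>" using lim unfolding u_def S_def .
  have q1: "(\<lambda>k::nat. real k ^ 2 / real (k+1)^2) \<longlonglongrightarrow> 1" by real_asymp
  have q2: "(\<lambda>k::nat. real (k+1) ^ 2 / real k^2) \<longlonglongrightarrow> 1" by real_asymp
  define L where "L n = u (r n - 1) * (real (r n) ^ 2 / real n)" for n
  define U where "U n = u (r n) * (real (r n + 1) ^ 2 / real n)" for n
  have ev1: "eventually (\<lambda>n. 1 \<le> r n) sequentially"
    using filterlim_at_top r_at by blast
  have rn: "real (r n) ^ 2 \<le> real n" "real n < real (r n + 1) ^2" for n
    unfolding r_def 
    using floor_sqrt_power2_le[of n] Suc_floor_sqrt_power2_gt[of n]
    by (metis of_nat_le_iff of_nat_power, metis Suc_eq_plus1 of_nat_less_iff of_nat_power)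
  have posn: "0 < real n" if "1 \<le> r n" for n
  proof -
    have "1 \<le> r n ^ 2" using that by simp
    also have "\<dots> \<le> n" unfolding r_def by (rule floor_sqrt_power2_le)
    finally show ?thesis by simp
  qed
  have A1: "(\<lambda>n. real (r n) ^ 2 / real n) \<longlonglongrightarrow> 1"
  proof (rule tendsto_sandwich[of "\<lambda>n. real (r n) ^ 2 / real (r n + 1)^2" _ _ "\<lambda>_. 1"])
    show "eventually (\<lambda>n. real (r n) ^ 2 / real (r n + 1)^2 \<le> real (r n) ^ 2 / real n) sequentially"
      using ev1 
    proof eventually_elim
      case (elim n)
      then have "0 < real n" by (rule posn)
      have "0 < real (r n + 1) ^ 2 * real n" using \<open>0 < real n\<close> by (intro mult_pos_pos) auto
      then show ?case using less_imp_le[OF rn(2)[of n]] by (intro divide_left_mono) auto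
    qed
    show "eventually (\<lambda>n. real (r n) ^ 2 / real n \<le> 1) sequentially"
      using ev1
    proof eventually_elim
      case (elim n)
      then have "0 < real n" by (rule posn)
      then show ?case using rn(1)[of n] by (simp add: pos_divide_le_eq)
    qed
    show "(\<lambda>n. real (r n) ^ 2 / real (r n + 1)^2) \<longlonglongrightarrow> 1"
      by (rule filterlim_compose[OF q1 r_at])
  qed simp
  have A2: "(\<lambda>n. real (r n + 1) ^ 2 / real n) \<longlonglongrightarrow> 1"
  proof (rule tendsto_sandwich[of "\<lambda>_. 1" _ _ "\<lambda>n. real (r n + 1) ^ 2 / real (r n)^2"])
    show "eventually (\<lambda>n. 1 \<le> real (r n + 1) ^ 2 / real n) sequentially"
      using ev1 
    proof eventually_elim
      case (elim n)
      then have "0 < real n" by (rule posn)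
      then show ?case using less_imp_le[OF rn(2)[of n]] by (simp add: pos_le_divide_eq)
    qed
    show "eventually (\<lambda>n. real (r n + 1) ^ 2 / real n \<le> real (r n + 1) ^ 2 / real (r n)^2) sequentially"
      using ev1
    proof eventually_elim
      case (elim n)
      then have "0 < real n" by (rule posn)
      have "0 < real n * real (r n) ^ 2" using \<open>0 < real n\<close> elim by (intro mult_pos_pos) auto
      then show ?case using rn(1)[of n] by (intro divide_left_mono) auto
    qed
    show "(\<lambda>n. real (r n + 1) ^ 2 / real (r n)^2) \<longlonglongrightarrow> 1"
      by (rule filterlim_compose[OF q2 r_at])
  qed simp
  have r1_at: "filterlim (\<lambda>n. r n - 1) at_top sequentially"
    by (rule filterlim_compose[OF _ r_at]) (rule filterlim_minus_const_nat_at_top)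
  have "L \<longlonglongrightarrow> \<mu> * 1"
    unfolding L_def by (rule tendsto_mult[OF filterlim_compose[OF u_lim r1_at] A1])
  then have Ll: "L \<longlonglongrightarrow> \<mu>" by simp
  have "U \<longlonglongrightarrow> \<mu> * 1"
    unfolding U_def by (rule tendsto_mult[OF filterlim_compose[OF u_lim r_at] A2])
  then have Ul: "U \<longlonglongrightarrow> \<mu>" by simp
  show ?thesis
  proof (rule tendsto_sandwich[OF _ _ Ll Ul])
    show "eventually (\<lambda>n. L n \<le> (\<Sum>j<n. a j) / real n) sequentially"
      using ev1
    proof eventually_elim
      case (elim n)
      have pos: "0 < real n" using elim by (rule posn)
      have e: "(r n - 1) + 1 = r n" using elim by simp
      have "L n = S ((r n)^2) / real n"
        unfolding L_def u_def e using elim by (simp add: field_simps)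
      also have "\<dots> \<le> S n / real n"
        using Smono[of "(r n)^2" n] pos floor_sqrt_power2_le[of n] unfolding r_def
        by (intro divide_right_mono) auto
      finally show ?case unfolding S_def .
    qed
    show "eventually (\<lambda>n. (\<Sum>j<n. a j) / real n \<le> U n) sequentially"
      using ev1
    proof eventually_elim
      case (elim n)
      have pos: "0 < real n" using elim by (rule posn)
      have "U n = S ((r n + 1)^2) / real n"
        unfolding U_def u_def by (simp add: field_simps)
      also have "S n / real n \<le> \<dots>"
        using Smono[of n "(r n + 1)^2"] pos Suc_floor_sqrt_power2_gt[of n] unfolding r_def
        by (intro divide_right_mono) auto
      finally show ?case unfolding S_def .
    qed
  qed
qed

lemma (in prob_space) slln_nonneg:
  fixes Y :: "nat \<Rightarrow> 'a \<Rightarrow> real"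
  assumes ind: "indep_vars (\<lambda>_. borel) Y UNIV"
    and nn: "\<And>j x. 0 \<le> Y j x"
    and sq: "\<And>j. integrable M (\<lambda>x. (Y j x)^2)"
    and mean: "\<And>j. expectation (Y j) = \<mu>"
    and var: "\<And>j. expectation (\<lambda>x. (Y j x)^2) \<le> C"
  shows "AE x in M. (\<lambda>n. (\<Sum>j<n. Y j x) / real n) \<longlonglongrightarrow> \<mu>"
proof -
  have rv: "Y j \<in> borel_measurable M" for j using ind unfolding indep_vars_def by auto
  have intY: "integrable M (Y j)" for j 
    by (rule square_integrable_imp_integrable[OF rv sq])
  define Z where "Z j x = Y j x - \<mu>" for j x
  have intZ: "integrable M (Z j)" for j unfolding Z_def using intY by auto
  have rvZ: "Z j \<in> borel_measurable M" for j unfolding Z_def using rv by measurable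
  have EZ: "expectation (Z j) = 0" for j
    unfolding Z_def using intY[of j] mean[of j] by (simp add: prob_space)
  have Z2: "(Z j x)^2 = (Y j x)^2 - 2 * \<mu> * Y j x + \<mu>^2" for j x
    unfolding Z_def by (simp add: power2_diff)
  have sqZ: "integrable M (\<lambda>x. (Z j x)^2)" for j
    unfolding Z2 using sq[of j] intY[of j] by auto
  have EZ2: "expectation (\<lambda>x. (Z j x)^2) \<le> C" for j
  proof -
    have "expectation (\<lambda>x. (Z j x)^2) = expectation (\<lambda>x. (Y j x)^2) - 2 * \<mu> * expectation (Y j) + \<mu>^2"
      unfolding Z2 using sq[of j] intY[of j] by (simp add: prob_space)
    also have "\<dots> = expectation (\<lambda>x. (Y j x)^2) - \<mu>^2" using mean[of j] by (simp add: power2_eq_square)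
    also have "\<dots> \<le> C" using var[of j] zero_le_power2[of \<mu>] by linarith
    finally show ?thesis .
  qed
  have C0: "0 \<le> C"
  proof -
    have "0 \<le> expectation (\<lambda>x. (Z 0 x)^2)" by (rule Bochner_Integration.integral_nonneg) simp
    then show ?thesis using EZ2[of 0] by linarith
  qed
  have indZ: "indep_vars (\<lambda>_. borel) Z UNIV"
    unfolding Z_def by (rule indep_vars_compose2[OF ind, of "\<lambda>j x. x - \<mu>"]) simp
  have cross: "expectation (\<lambda>x. Z j x * Z k x) = 0" if "j \<noteq> k" for j k
  proof -
    have i2: "indep_vars (\<lambda>_. borel) Z {j, k}" by (rule indep_vars_subset[OF indZ]) simp
    have "expectation (\<lambda>x. \<Prod>i\<in>{j,k}. Z i x) = (\<Prod>i\<in>{j,k}. expectation (Z i))"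
      by (rule indep_vars_lebesgue_integral[OF _ i2]) (auto simp: intZ)
    then show ?thesis using that EZ by simp
  qed
  have intprod: "integrable M (\<lambda>x. Z j x * Z k x)" for j k
  proof (cases "j = k")
    case True then show ?thesis using sqZ[of j] by (simp add: power2_eq_square)
  next
    case False
    have i2: "indep_vars (\<lambda>_. borel) Z {j, k}" by (rule indep_vars_subset[OF indZ]) simp
    have "integrable M (\<lambda>x. \<Prod>i\<in>{j,k}. Z i x)"
      by (rule indep_vars_integrable[OF _ i2]) (auto simp: intZ)
    then show ?thesis using False by simp
  qed
  have expand: "(\<Sum>j<m. Z j x)^2 = (\<Sum>j<m. \<Sum>k<m. Z j x * Z k x)" for m x
    by (simp add: power2_eq_square sum_product)
  have int_sum_sq: "integrable M (\<lambda>x. (\<Sum>j<m. Z j x)^2)" for m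
    unfolding expand by (intro Bochner_Integration.integrable_sum intprod)
  have var_sum: "expectation (\<lambda>x. (\<Sum>j<m. Z j x)^2) \<le> real m * C" for m
  proof -
    have "expectation (\<lambda>x. (\<Sum>j<m. Z j x)^2) = (\<Sum>j<m. \<Sum>k<m. expectation (\<lambda>x. Z j x * Z k x))"
      unfolding expand
      by (simp add: Bochner_Integration.integral_sum Bochner_Integration.integrable_sum intprod)
    also have "\<dots> = (\<Sum>j<m. expectation (\<lambda>x. (Z j x)^2))"
    proof (rule sum.cong[OF refl])
      fix j assume j: "j \<in> {..<m}"
      have "(\<Sum>k<m. expectation (\<lambda>x. Z j x * Z k x)) = (\<Sum>k<m. if k = j then expectation (\<lambda>x. (Z j x)^2) else 0)"
        by (rule sum.cong[OF refl]) (auto simp: cross power2_eq_square)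
      also have "\<dots> = expectation (\<lambda>x. (Z j x)^2)" using j by simp
      finally show "(\<Sum>k<m. expectation (\<lambda>x. Z j x * Z k x)) = expectation (\<lambda>x. (Z j x)^2)" .
    qed
    also have "\<dots> \<le> (\<Sum>j<m. C)" by (rule sum_mono) (rule EZ2)
    finally show ?thesis by simp
  qed
  define W where "W k x = ((\<Sum>j<(k+1)^2. Z j x) / real ((k+1)^2))^2" for k x
  have W_nn: "0 \<le> W k x" for k x unfolding W_def by simp
  have W_meas: "W k \<in> borel_measurable M" for k unfolding W_def using rvZ by measurable
  have W_int: "integrable M (W k)" for k
    unfolding W_def power_divide using int_sum_sq by simp
  have EW: "expectation (W k) \<le> C / real (k+1)^2" for k
  proof -
    have pos: "0 < real (k+1)^2" by simp
    have "expectation (W k) = expectation (\<lambda>x. (\<Sum>j<(k+1)^2. Z j x)^2) / (real (k+1)^2)^2"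
      unfolding W_def power_divide by simp
    also have "\<dots> \<le> (real ((k+1)^2) * C) / (real (k+1)^2)^2"
      by (intro divide_right_mono var_sum) simp
    also have "\<dots> = C / real (k+1)^2"
    proof -
      have gen: "(a * C) / a^2 = C / a" if "0 < a" for a :: real
        using that by (simp add: power2_eq_square)
      show ?thesis using gen[OF pos] by (simp only: of_nat_power)
    qed
    finally show ?thesis .
  qed
  have summ: "summable (\<lambda>k. C / real (k+1)^2)"
  proof -
    have "summable (\<lambda>n. inverse (real n ^ 2))" by (rule inverse_power_summable) simp
    then have "summable (\<lambda>n. inverse (real (Suc n) ^ 2))" by (subst summable_Suc_iff)
    then have "summable (\<lambda>n. C * inverse (real (Suc n) ^ 2))" by (rule summable_mult)
    then show ?thesis by (simp add: divide_inverse)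
  qed
  have "(\<integral>\<^sup>+x. (\<Sum>k. ennreal (W k x)) \<partial>M) = (\<Sum>k. \<integral>\<^sup>+x. ennreal (W k x) \<partial>M)"
    by (rule nn_integral_suminf) (use W_meas in measurable)
  also have "\<dots> = (\<Sum>k. ennreal (expectation (W k)))"
    by (subst nn_integral_eq_integral) (auto simp: W_int W_nn)
  also have "\<dots> \<le> (\<Sum>k. ennreal (C / real (k+1)^2))"
    by (intro suminf_le summableI ennreal_leI EW)
  also have "\<dots> = ennreal (\<Sum>k. C / real (k+1)^2)"
    by (rule suminf_ennreal2[OF _ summ]) (simp add: C0)
  finally have fin: "(\<integral>\<^sup>+x. (\<Sum>k. ennreal (W k x)) \<partial>M) \<noteq> \<infinity>"
    by (auto simp: top_unique)
  have "AE x in M. (\<Sum>k. ennreal (W k x)) \<noteq> \<infinity>"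
    by (rule nn_integral_PInf_AE[OF _ fin]) (use W_meas in measurable)
  then show ?thesis
  proof eventually_elim
    case (elim x)
    have "summable (\<lambda>k. W k x)" using summable_suminf_not_top[OF W_nn] elim by simp
    then have "(\<lambda>k. W k x) \<longlonglongrightarrow> 0" by (rule summable_LIMSEQ_zero)
    then have "(\<lambda>k. sqrt (W k x)) \<longlonglongrightarrow> sqrt 0" by (rule tendsto_real_sqrt)
    then have "(\<lambda>k. \<bar>(\<Sum>j<(k+1)^2. Z j x) / real ((k+1)^2)\<bar>) \<longlonglongrightarrow> 0"
      unfolding W_def by simp
    then have "(\<lambda>k. (\<Sum>j<(k+1)^2. Z j x) / real ((k+1)^2)) \<longlonglongrightarrow> 0"
      by (rule tendsto_rabs_zero_cancel)
    then have "(\<lambda>k. (\<Sum>j<(k+1)^2. Z j x) / real ((k+1)^2) + \<mu>) \<longlonglongrightarrow> 0 + \<mu>"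
      by (intro tendsto_add tendsto_const)
    moreover have "(\<Sum>j<(k+1)^2. Z j x) / real ((k+1)^2) + \<mu> = (\<Sum>j<(k+1)^2. Y j x) / real ((k+1)^2)" for k
    proof -
      have "(\<Sum>j<(k+1)^2. Z j x) = (\<Sum>j<(k+1)^2. Y j x) - real ((k+1)^2) * \<mu>"
        unfolding Z_def by (simp add: sum_subtractf)
      then show ?thesis by (simp add: field_simps)
    qed
    ultimately have "(\<lambda>k. (\<Sum>j<(k+1)^2. Y j x) / real ((k+1)^2)) \<longlonglongrightarrow> \<mu>" by simp
    then show ?case by (rule sandwich_sq[OF nn])
  qed
qed

lemma (in prob_space) col_indep:
  fixes g :: "'d::finite \<Rightarrow> nat \<Rightarrow> 'a \<Rightarrow> real"
  assumes ind: "indep_vars (\<lambda>_. borel) (\<lambda>(i,j). g i j) UNIV"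
    and F: "F \<in> borel_measurable (PiM (UNIV::'d set) (\<lambda>_. borel))"
  shows "indep_vars (\<lambda>_. borel) (\<lambda>j x. F (\<lambda>i. g i j x)) UNIV"
proof -
  define K where "K j = {p::'d \<times> nat. snd p = j}" for j
  have r: "indep_vars (\<lambda>j. PiM (K j) (\<lambda>_. borel)) (\<lambda>j \<omega>. restrict (\<lambda>p. (\<lambda>(i,j). g i j) p \<omega>) (K j)) UNIV"
    by (rule indep_vars_restrict[OF ind]) (auto simp: K_def disjoint_family_on_def)
  have meas: "(\<lambda>h. F (\<lambda>i. h (i, j))) \<in> borel_measurable (PiM (K j) (\<lambda>_. borel))" for j
  proof -
    have "(\<lambda>h. \<lambda>i. h (i, j)) \<in> measurable (PiM (K j) (\<lambda>_. borel)) (PiM (UNIV::'d set) (\<lambda>_. borel))"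
      by (rule measurable_PiM_single') (auto simp: K_def intro!: measurable_component_singleton)
    from measurable_compose[OF this F] show ?thesis by (simp add: o_def)
  qed
  have "indep_vars (\<lambda>_. borel) (\<lambda>j \<omega>. (\<lambda>h. F (\<lambda>i. h (i, j))) (restrict (\<lambda>p. (\<lambda>(i,j). g i j) p \<omega>) (K j))) UNIV"
    by (rule indep_vars_compose2[OF r meas])
  moreover have "(\<lambda>j \<omega>. (\<lambda>h. F (\<lambda>i. h (i, j))) (restrict (\<lambda>p. (\<lambda>(i,j). g i j) p \<omega>) (K j))) = (\<lambda>j x. F (\<lambda>i. g i j x))"
    by (auto simp: K_def)
  ultimately show ?thesis by simp
qed

lemma (in prob_space) row_indep:
  fixes g :: "'d::finite \<Rightarrow> nat \<Rightarrow> 'a \<Rightarrow> real"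
  assumes ind: "indep_vars (\<lambda>_. borel) (\<lambda>(i,j). g i j) UNIV"
  shows "indep_vars (\<lambda>_. borel) (\<lambda>i. g i j) UNIV"
proof -
  define K where "K i = {(i, j)}" for i :: 'd
  have r: "indep_vars (\<lambda>i. PiM (K i) (\<lambda>_. borel)) (\<lambda>i \<omega>. restrict (\<lambda>p. (\<lambda>(i,j). g i j) p \<omega>) (K i)) UNIV"
    by (rule indep_vars_restrict[OF ind]) (auto simp: K_def disjoint_family_on_def)
  have meas: "(\<lambda>h. h (i, j)) \<in> borel_measurable (PiM (K i) (\<lambda>_. borel))" for i
    by (rule measurable_component_singleton) (simp add: K_def)
  have "indep_vars (\<lambda>_. borel) (\<lambda>i \<omega>. (\<lambda>h. h (i, j)) (restrict (\<lambda>p. (\<lambda>(i,j). g i j) p \<omega>) (K i))) UNIV"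
    by (rule indep_vars_compose2[OF r meas])
  moreover have "(\<lambda>i \<omega>. (\<lambda>h. h (i, j)) (restrict (\<lambda>p. (\<lambda>(i,j). g i j) p \<omega>) (K i))) = (\<lambda>i. g i j)"
    by (auto simp: K_def)
  ultimately show ?thesis by simp
qed

lemma (in prob_space) inner_normal:
  fixes g :: "'d::finite \<Rightarrow> nat \<Rightarrow> 'a \<Rightarrow> real"
  assumes ind: "indep_vars (\<lambda>_. borel) (\<lambda>(i,j). g i j) UNIV"
    and gd: "\<And>i j. distributed M lborel (g i j) std_normal_density"
    and th: "\<theta> \<noteq> 0"
  shows "distributed M lborel (\<lambda>x. \<Sum>i\<in>UNIV. \<theta>$i * g i j x) (normal_density 0 (norm \<theta>))"
proof -
  define I where "I = {i. \<theta>$i \<noteq> 0}"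
  have I0: "I \<noteq> {}" using th unfolding I_def by (auto simp: vec_eq_iff)
  have indI: "indep_vars (\<lambda>_. borel) (\<lambda>i x. \<theta>$i * g i j x) I"
    by (rule indep_vars_subset[OF indep_vars_compose2[OF row_indep[OF ind, of j], of "\<lambda>i y. \<theta>$i * y"]]) auto
  have dI: "distributed M lborel (\<lambda>x. \<theta>$i * g i j x) (normal_density 0 \<bar>\<theta>$i\<bar>)" if "i \<in> I" for i
  proof -
    have "distributed M lborel (\<lambda>x. 0 + \<theta>$i * g i j x) (normal_density (0 + \<theta>$i * 0) (\<bar>\<theta>$i\<bar> * 1))"
      by (rule normal_density_affine) (use gd[of i j] that in \<open>auto simp: I_def\<close>)
    then show ?thesis by simp
  qed
  have "distributed M lborel (\<lambda>x. \<Sum>i\<in>I. \<theta>$i * g i j x) (normal_density (\<Sum>i\<in>I. 0) (sqrt (\<Sum>i\<in>I. \<bar>\<theta>$i\<bar>\<^sup>2)))"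
    by (rule sum_indep_normal[OF _ I0 indI]) (auto simp: dI I_def)
  moreover have "(\<lambda>x. \<Sum>i\<in>I. \<theta>$i * g i j x) = (\<lambda>x. \<Sum>i\<in>UNIV. \<theta>$i * g i j x)"
    by (intro ext sum.mono_neutral_left) (auto simp: I_def)
  moreover have "sqrt (\<Sum>i\<in>I. \<bar>\<theta>$i\<bar>\<^sup>2) = norm \<theta>"
  proof -
    have "(\<Sum>i\<in>I. \<bar>\<theta>$i\<bar>\<^sup>2) = (\<Sum>i\<in>UNIV. \<bar>\<theta>$i\<bar>\<^sup>2)"
      by (intro sum.mono_neutral_left) (auto simp: I_def)
    then show ?thesis by (simp add: norm_vec_def L2_set_def)
  qed
  ultimately show ?thesis by simp
qed

lemma (in prob_space) normal_moments:
  assumes D: "distributed M lborel X (normal_density 0 s)" and s: "0 < s"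
  shows "integrable M (\<lambda>x. (X x)^2)" "integrable M (\<lambda>x. (X x)^4)"
    "expectation (\<lambda>x. \<bar>X x\<bar>) = s * sqrt (2/pi)"
    "expectation (\<lambda>x. (X x)^2) = s^2"
    "expectation (\<lambda>x. (X x)^4) = 3 * s^4"
proof -
  have nn: "\<And>x. 0 \<le> normal_density 0 s x" by (simp add: normal_density_nonneg)
  have "integrable lborel (\<lambda>x. normal_density 0 s x * (x - 0)^2)"
    by (rule integrable_normal_moment[OF s])
  then show "integrable M (\<lambda>x. (X x)^2)"
    using distributed_integrable[OF D, of "\<lambda>x. x^2"] nn by simp
  have "integrable lborel (\<lambda>x. normal_density 0 s x * (x - 0)^4)"
    by (rule integrable_normal_moment[OF s])
  then show "integrable M (\<lambda>x. (X x)^4)"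
    using distributed_integrable[OF D, of "\<lambda>x. x^4"] nn by simp
  have "integral\<^sup>L lborel (\<lambda>x. normal_density 0 s x * \<bar>x - 0\<bar>^(2*0+1)) = 2 ^ 0 * s ^ (2 * 0 + 1) * fact 0 * sqrt (2 / pi)"
    by (rule integral_normal_moment_abs_odd[OF s])
  then show "expectation (\<lambda>x. \<bar>X x\<bar>) = s * sqrt (2/pi)"
    using distributed_integral[OF D, of "\<lambda>x. \<bar>x\<bar>"] nn by simp
  have "integral\<^sup>L lborel (\<lambda>x. normal_density 0 s x * (x - 0)^(2*1)) = fact (2 * 1) / ((2 / s\<^sup>2)^1 * fact 1)"
    by (rule integral_normal_moment_even[OF s])
  then show "expectation (\<lambda>x. (X x)^2) = s^2"
    using distributed_integral[OF D, of "\<lambda>x. x^2"] nn s by simp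
  have "integral\<^sup>L lborel (\<lambda>x. normal_density 0 s x * (x - 0)^(2*2)) = fact (2 * 2) / ((2 / s\<^sup>2)^2 * fact 2)"
    by (rule integral_normal_moment_even[OF s])
  moreover have "fact (2 * 2) / ((2 / s\<^sup>2)^2 * fact 2) = 3 * s^4"
    using s by (simp add: fact_numeral power2_eq_square field_simps power4_eq_xxxx)
  ultimately show "expectation (\<lambda>x. (X x)^4) = 3 * s^4"
    using distributed_integral[OF D, of "\<lambda>x. x^4"] nn by simp
qed

lemma (in prob_space) gauss_limits:
  fixes g :: "'d::finite \<Rightarrow> nat \<Rightarrow> 'a \<Rightarrow> real"
  assumes ind: "indep_vars (\<lambda>_. borel) (\<lambda>(i,j). g i j) UNIV"
    and gd: "\<And>i j. distributed M lborel (g i j) std_normal_density"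
  shows "AE x in M. (\<lambda>n. (\<Sum>j<n. \<bar>\<Sum>i\<in>UNIV. \<theta>$i * g i j x\<bar>) / real n) \<longlonglongrightarrow> norm \<theta> * sqrt (2/pi)"
    and "AE x in M. (\<lambda>n. (\<Sum>j<n. (\<Sum>i\<in>UNIV. \<theta>$i * g i j x)^2) / real n) \<longlonglongrightarrow> (norm \<theta>)^2"
proof -
  have "(AE x in M. (\<lambda>n. (\<Sum>j<n. \<bar>\<Sum>i\<in>UNIV. \<theta>$i * g i j x\<bar>) / real n) \<longlonglongrightarrow> norm \<theta> * sqrt (2/pi)) \<and>
        (AE x in M. (\<lambda>n. (\<Sum>j<n. (\<Sum>i\<in>UNIV. \<theta>$i * g i j x)^2) / real n) \<longlonglongrightarrow> (norm \<theta>)^2)"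
  proof (cases "\<theta> = 0")
    case True
    then show ?thesis by simp
  next
    case False
    define X where "X j x = (\<Sum>i\<in>UNIV. \<theta>$i * g i j x)" for j x
    have D: "distributed M lborel (X j) (normal_density 0 (norm \<theta>))" for j
      unfolding X_def by (rule inner_normal[OF ind gd False])
    have s: "0 < norm \<theta>" using False by simp
    note mom = normal_moments[OF D s]
    have measF1: "(\<lambda>h. \<bar>\<Sum>i\<in>UNIV. \<theta>$i * h i\<bar>) \<in> borel_measurable (PiM (UNIV::'d set) (\<lambda>_. borel))"
      by measurable
    have measF2: "(\<lambda>h. (\<Sum>i\<in>UNIV. \<theta>$i * h i)^2) \<in> borel_measurable (PiM (UNIV::'d set) (\<lambda>_. borel))"
      by measurable
    have ind1: "indep_vars (\<lambda>_. borel) (\<lambda>j x. \<bar>X j x\<bar>) UNIV"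
      using col_indep[OF ind measF1] unfolding X_def .
    have ind2: "indep_vars (\<lambda>_. borel) (\<lambda>j x. (X j x)^2) UNIV"
      using col_indep[OF ind measF2] unfolding X_def .
    have "AE x in M. (\<lambda>n. (\<Sum>j<n. \<bar>X j x\<bar>) / real n) \<longlonglongrightarrow> norm \<theta> * sqrt (2/pi)"
      by (rule slln_nonneg[OF ind1, where C="(norm \<theta>)^2"]) (use mom in auto)
    moreover have "AE x in M. (\<lambda>n. (\<Sum>j<n. (X j x)^2) / real n) \<longlonglongrightarrow> (norm \<theta>)^2"
    proof (rule slln_nonneg[OF ind2, where C="3 * (norm \<theta>)^4"])
      fix j
      show "integrable M (\<lambda>x. ((X j x)^2)^2)" using mom(2)[of j] by (simp add: power_mult[symmetric])
      show "expectation (\<lambda>x. ((X j x)^2)^2) \<le> 3 * (norm \<theta>)^4" using mom(5)[of j] by (simp add: power_mult[symmetric])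
    qed (use mom in auto)
    ultimately show ?thesis unfolding X_def by simp
  qed
  then show "AE x in M. (\<lambda>n. (\<Sum>j<n. \<bar>\<Sum>i\<in>UNIV. \<theta>$i * g i j x\<bar>) / real n) \<longlonglongrightarrow> norm \<theta> * sqrt (2/pi)"
    and "AE x in M. (\<lambda>n. (\<Sum>j<n. (\<Sum>i\<in>UNIV. \<theta>$i * g i j x)^2) / real n) \<longlonglongrightarrow> (norm \<theta>)^2" by auto
qed

lemma norm_vec_sq: "(norm (v :: 'a::real_normed_vector^'n))^2 = (\<Sum>i\<in>UNIV. (norm (v$i))^2)"
  by (simp add: norm_vec_def L2_set_def sum_nonneg)

lemma norm_mat_sq: "(norm (A :: real^'n^'m))^2 = (\<Sum>i\<in>UNIV. \<Sum>j\<in>UNIV. (A$i$j)^2)"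
  by (simp add: norm_vec_sq)

lemma sym_inner:
  fixes M :: "real^'n^'n"
  assumes "transpose M = M"
  shows "inner (M *v u) w = inner u (M *v w)"
proof -
  have "inner (M *v u) w = inner (transpose M *v u) w" using assms by simp
  also have "\<dots> = inner (u v* M) w" by simp
  also have "\<dots> = inner u (M *v w)" by (rule dot_lmul_matrix)
  finally show ?thesis .
qed

lemma norm_mv: "norm ((A :: real^'n^'m) *v x) \<le> norm A * norm x"
proof -
  have "(norm (A *v x))^2 = (\<Sum>i\<in>UNIV. (inner (A$i) x)^2)"
    by (simp add: norm_vec_sq matrix_vector_mul_component)
  also have "\<dots> \<le> (\<Sum>i\<in>UNIV. (norm (A$i))^2 * (norm x)^2)"
  proof (rule sum_mono)
    fix i
    have "\<bar>inner (A$i) x\<bar> \<le> norm (A$i) * norm x" by (rule Cauchy_Schwarz_ineq2)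
    then have "\<bar>inner (A$i) x\<bar>^2 \<le> (norm (A$i) * norm x)^2" by (rule power_mono) simp
    then show "(inner (A$i) x)^2 \<le> (norm (A$i))^2 * (norm x)^2" by (simp add: power_mult_distrib)
  qed
  also have "\<dots> = (norm A * norm x)^2"
    by (simp add: norm_vec_sq[of A] power_mult_distrib sum_distrib_right)
  finally show ?thesis by (rule power2_le_imp_le) simp
qed

lemma norm_mm: "norm ((A :: real^'n^'m) ** (B :: real^'p^'n)) \<le> norm A * norm B"
proof -
  have comp: "(A ** B)$i$k = inner (A$i) (column k B)" for i k
    by (simp add: matrix_matrix_mult_def inner_vec_def column_def mult.commute)
  have colsum: "(\<Sum>k\<in>UNIV. (norm (column k B))^2) = (norm B)^2"
  proof -
    have "(\<Sum>k\<in>UNIV. (norm (column k B))^2) = (\<Sum>k\<in>UNIV. \<Sum>j\<in>UNIV. (B$j$k)^2)"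
      by (simp add: norm_vec_sq column_def)
    also have "\<dots> = (\<Sum>j\<in>UNIV. \<Sum>k\<in>UNIV. (B$j$k)^2)" by (rule sum.swap)
    also have "\<dots> = (norm B)^2" by (simp add: norm_mat_sq)
    finally show ?thesis .
  qed
  have "(norm (A ** B))^2 = (\<Sum>i\<in>UNIV. \<Sum>k\<in>UNIV. (inner (A$i) (column k B))^2)"
    by (simp add: norm_mat_sq comp)
  also have "\<dots> \<le> (\<Sum>i\<in>UNIV. \<Sum>k\<in>UNIV. (norm (A$i))^2 * (norm (column k B))^2)"
  proof (intro sum_mono)
    fix i k
    have "\<bar>inner (A$i) (column k B)\<bar> \<le> norm (A$i) * norm (column k B)" by (rule Cauchy_Schwarz_ineq2)
    then have "\<bar>inner (A$i) (column k B)\<bar>^2 \<le> (norm (A$i) * norm (column k B))^2" by (rule power_mono) simp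
    then show "(inner (A$i) (column k B))^2 \<le> (norm (A$i))^2 * (norm (column k B))^2" by (simp add: power_mult_distrib)
  qed
  also have "\<dots> = (\<Sum>i\<in>UNIV. (norm (A$i))^2) * (\<Sum>k\<in>UNIV. (norm (column k B))^2)"
    by (rule sum_product[symmetric])
  also have "\<dots> = (norm A * norm B)^2" by (simp add: colsum norm_vec_sq[of A] power_mult_distrib)
  finally show ?thesis by (rule power2_le_imp_le) simp
qed

lemma norm_transpose: "norm (transpose (A :: real^'n^'m)) = norm A"
proof -
  have "(norm (transpose A))^2 = (norm A)^2"
    unfolding norm_mat_sq by (simp add: transpose_def) (rule sum.swap)
  then show ?thesis by (simp add: power2_eq_iff_nonneg)
qed

lemma trace_comm: "trace ((A :: real^'n^'n) ** B) = trace (B ** A)"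
  unfolding trace_def matrix_matrix_mult_def
  by (simp) (subst sum.swap, simp add: mult.commute)

lemma axis_col: "(M :: real^'n^'m) *v axis i 1 = column i M"
  by (simp add: vec_eq_iff matrix_vector_mult_def axis_def column_def if_distrib cong: if_cong)

lemma trace_inner: "trace (M :: real^'n^'n) = (\<Sum>i\<in>UNIV. inner (axis i 1) (M *v axis i 1))"
  by (simp add: trace_def axis_col inner_axis' column_def)

lemma pd_inj:
  assumes "pos_def_mat R" "R *v x = 0" shows "x = 0"
  using assms unfolding pos_def_mat_def by (metis inner_zero_right less_irrefl)

lemma pd_sqrt_unique:
  fixes R S :: "real^'n^'n"
  assumes R: "pos_def_mat R" and S: "pos_def_mat S" and eq: "R ** R = S ** S"
  shows "R = S"
proof -
  define D where "D = R - S"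
  have Rs: "transpose R = R" and Ss: "transpose S = S" using R S by (auto simp: pos_def_mat_def)
  have Ds: "transpose D = D" unfolding D_def using Rs Ss by (simp add: transpose_def vec_eq_iff)
  have key: "R ** D + D ** S = 0"
  proof -
    have "R ** D + D ** S = R ** R - S ** S"
      unfolding D_def by (simp add: matrix_matrix_mult_def vec_eq_iff sum_subtractf right_diff_distrib left_diff_distrib sum.distrib[symmetric])
    then show ?thesis using eq by simp
  qed
  define v where "v i = D *v axis i 1" for i
  have a: "inner (v i) (R *v v i) + inner (v i) (D *v (S *v axis i 1)) = 0" for i
  proof -
    have "(R ** D + D ** S) *v axis i 1 = 0" using key by simp
    then have "R *v v i + D *v (S *v axis i 1) = 0"
      by (simp add: v_def matrix_vector_mult_add_rdistrib matrix_vector_mul_assoc)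
    then have "inner (v i) (R *v v i + D *v (S *v axis i 1)) = 0" by simp
    then show ?thesis by (simp add: inner_add_right)
  qed
  have b: "(\<Sum>i\<in>UNIV. inner (v i) (D *v (S *v axis i 1))) = (\<Sum>i\<in>UNIV. inner (v i) (S *v v i))"
  proof -
    have "(\<Sum>i\<in>UNIV. inner (v i) (D *v (S *v axis i 1))) = trace (D ** (D ** S))"
      unfolding trace_inner v_def
      by (simp add: sym_inner[OF Ds] matrix_vector_mul_assoc)
    also have "\<dots> = trace ((D ** S) ** D)" by (rule trace_comm)
    also have "\<dots> = (\<Sum>i\<in>UNIV. inner (v i) (S *v v i))"
      unfolding trace_inner v_def
      by (simp add: sym_inner[OF Ds] matrix_vector_mul_assoc matrix_mul_assoc)
    finally show ?thesis .
  qed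
  have Rpos: "x \<noteq> 0 \<Longrightarrow> 0 < inner x (R *v x)" for x using R unfolding pos_def_mat_def by blast
  have Spos: "x \<noteq> 0 \<Longrightarrow> 0 < inner x (S *v x)" for x using S unfolding pos_def_mat_def by blast
  have nnR: "0 \<le> inner (v i) (R *v v i)" for i
  proof (cases "v i = 0")
    case True then show ?thesis by simp
  next
    case False then show ?thesis using Rpos[of "v i"] by simp
  qed
  have nnS: "0 \<le> inner (v i) (S *v v i)" for i
  proof (cases "v i = 0")
    case True then show ?thesis by simp
  next
    case False then show ?thesis using Spos[of "v i"] by simp
  qed
  have "(\<Sum>i\<in>UNIV. inner (v i) (R *v v i)) + (\<Sum>i\<in>UNIV. inner (v i) (S *v v i)) = 0"
    using sum.distrib[of "\<lambda>i. inner (v i) (R *v v i)" "\<lambda>i. inner (v i) (D *v (S *v axis i 1))" UNIV] a b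
    by simp
  moreover have "0 \<le> (\<Sum>i\<in>UNIV. inner (v i) (S *v v i))" by (rule sum_nonneg) (rule nnS)
  moreover have "0 \<le> (\<Sum>i\<in>UNIV. inner (v i) (R *v v i))" by (rule sum_nonneg) (rule nnR)
  ultimately have "(\<Sum>i\<in>UNIV. inner (v i) (R *v v i)) = 0" by linarith
  then have z: "inner (v i) (R *v v i) = 0" for i
    using sum_nonneg_eq_0_iff[of UNIV "\<lambda>i. inner (v i) (R *v v i)"] nnR by simp
  have v0: "v i = 0" for i
  proof (rule ccontr)
    assume "v i \<noteq> 0"
    then have "0 < inner (v i) (R *v v i)" by (rule Rpos)
    then show False using z[of i] by simp
  qed
  have "D = 0"
  proof -
    have "D $ k $ i = 0" for k i
      using v0[of i] unfolding v_def axis_col by (simp add: column_def vec_eq_iff)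
    then show ?thesis by (simp add: vec_eq_iff)
  qed
  then show ?thesis unfolding D_def by simp
qed

lemma sqrt_near_id:
  fixes E :: "real^'n^'n"
  assumes Es: "transpose E = E" and En: "norm E \<le> 1/8"
  shows "\<exists>X. transpose X = X \<and> norm X \<le> 2 * norm E \<and> norm X \<le> 1/4 \<and> (mat 1 + X) ** (mat 1 + X) = mat 1 + E"
proof -
  define f where "f X = (1/2) *\<^sub>R (E - X ** X)" for X :: "real^'n^'n"
  define S where "S = cball (0::real^'n^'n) (1/4)"
  have sq_diff: "X ** X - Y ** Y = X ** (X - Y) + (X - Y) ** Y" for X Y :: "real^'n^'n"
    by (simp add: matrix_matrix_mult_def vec_eq_iff sum_subtractf right_diff_distrib left_diff_distrib sum.distrib[symmetric])
  have fS: "f ` S \<subseteq> S"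
  proof
    fix Y assume "Y \<in> f ` S"
    then obtain X where X: "X \<in> S" "Y = f X" by auto
    have nX: "norm X \<le> 1/4" using X by (simp add: S_def)
    have "norm (X ** X) \<le> norm X * norm X" by (rule norm_mm)
    also have "\<dots> \<le> (1/4) * (1/4)" using nX by (intro mult_mono) auto
    finally have "norm (X ** X) \<le> 1/16" by simp
    then have "norm (E - X ** X) \<le> 1/8 + 1/16" using En norm_triangle_ineq4[of E "X ** X"] by linarith
    then show "Y \<in> S" unfolding X(2) f_def S_def by simp
  qed
  have lip: "dist (f X) (f Y) \<le> (1/4) * dist X Y" if "X \<in> S" "Y \<in> S" for X Y
  proof -
    have nX: "norm X \<le> 1/4" and nY: "norm Y \<le> 1/4" using that by (auto simp: S_def)
    have "f X - f Y = (-1/2) *\<^sub>R (X ** X - Y ** Y)" unfolding f_def by (simp add: algebra_simps)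
    then have "dist (f X) (f Y) = (1/2) * norm (X ** (X - Y) + (X - Y) ** Y)"
      by (simp add: dist_norm sq_diff)
    also have "\<dots> \<le> (1/2) * (norm (X ** (X - Y)) + norm ((X - Y) ** Y))"
      by (simp add: norm_triangle_ineq)
    also have "\<dots> \<le> (1/2) * (norm X * norm (X - Y) + norm (X - Y) * norm Y)"
      using norm_mm[of X "X - Y"] norm_mm[of "X - Y" Y] by simp
    also have "\<dots> \<le> (1/2) * ((1/4) * norm (X - Y) + norm (X - Y) * (1/4))"
      using nX nY by (intro mult_left_mono add_mono mult_right_mono mult_left_mono) auto
    also have "\<dots> = (1/4) * dist X Y" by (simp add: dist_norm)
    finally show ?thesis .
  qed
  have "\<exists>!X\<in>S. f X = X"
    by (rule Banach_fix[OF _ _ _ _ fS lip]) (auto simp: S_def complete_eq_closed)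
  then obtain X where X: "X \<in> S" "f X = X" and uniq: "\<And>Y. Y \<in> S \<Longrightarrow> f Y = Y \<Longrightarrow> Y = X" by blast
  have nX: "norm X \<le> 1/4" using X by (simp add: S_def)
  have tX: "transpose X = X"
  proof (rule uniq)
    show "transpose X \<in> S" using nX by (simp add: S_def norm_transpose)
    have "transpose (f X) = f (transpose X)"
    proof -
      have tl: "transpose (c *\<^sub>R (A - B)) = c *\<^sub>R (transpose A - transpose B)" for c and A B :: "real^'n^'n"
        by (simp add: transpose_def vec_eq_iff algebra_simps)
      show ?thesis unfolding f_def tl Es matrix_transpose_mul ..
    qed
    then show "f (transpose X) = transpose X" using X(2) by simp
  qed
  have eqX: "2 *\<^sub>R X + X ** X = E"
  proof -
    have "X = (1/2) *\<^sub>R (E - X ** X)" using X(2) by (simp add: f_def)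
    then have "2 *\<^sub>R X = E - X ** X" by (metis (no_types, lifting) divide_self_if scaleR_one scaleR_scaleR times_divide_eq_right zero_neq_numeral divide_inverse_commute mult.commute)
    then show ?thesis by (simp add: algebra_simps)
  qed
  have sqr: "(mat 1 + X) ** (mat 1 + X) = mat 1 + E"
  proof -
    have "(mat 1 + X) ** (mat 1 + X) = mat 1 + 2 *\<^sub>R X + X ** X"
    proof -
      have rd: "(A + B) ** C = A ** C + B ** C" for A B C :: "real^'n^'n"
        by (simp add: matrix_matrix_mult_def vec_eq_iff distrib_right sum.distrib)
      show ?thesis by (simp add: matrix_add_ldistrib rd scaleR_2 algebra_simps)
    qed
    then show ?thesis using eqX by (simp add: algebra_simps)
  qed
  have bound: "norm X \<le> 2 * norm E"
  proof -
    have "2 * norm X = norm (E - X ** X)" using eqX by (metis add_diff_cancel_right' norm_scaleR abs_numeral)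
    also have "\<dots> \<le> norm E + norm (X ** X)" by (rule norm_triangle_ineq4)
    also have "\<dots> \<le> norm E + norm X * norm X" using norm_mm[of X X] by simp
    also have "\<dots> \<le> norm E + (1/4) * norm X" using nX by (intro add_left_mono mult_right_mono) auto
    finally show ?thesis using norm_ge_zero[of E] by linarith
  qed
  show ?thesis using tX bound nX sqr by blast
qed

lemma pd_right_inverse:
  fixes S :: "real^'n^'n"
  assumes S: "pos_def_mat S"
  shows "S ** matrix_inv S = mat 1"
proof -
  have "inj ((*v) S)"
  proof (rule injI)
    fix x y assume "S *v x = S *v y"
    then have "S *v (x - y) = 0" by (simp add: matrix_vector_mult_diff_distrib)
    then have "x - y = 0" by (rule pd_inj[OF S])
    then show "x = y" by simp
  qed
  then have "invertible S" using matrix_left_invertible_injective invertible_left_inverse by blast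
  then have "\<exists>A'. S ** A' = mat 1 \<and> A' ** S = mat 1" unfolding invertible_def .
  then have "S ** matrix_inv S = mat 1 \<and> matrix_inv S ** S = mat 1"
    unfolding matrix_inv_def by (rule someI_ex)
  then show ?thesis by simp
qed

lemma pd_near_id:
  fixes X :: "real^'n^'n"
  assumes "transpose X = X" "norm X < 1"
  shows "pos_def_mat (mat 1 + X)"
  unfolding pos_def_mat_def
proof safe
  show "transpose (mat 1 + X) = mat 1 + X"
    using assms(1) by (simp add: transpose_def vec_eq_iff mat_def)
  fix x :: "real^'n" assume x: "x \<noteq> 0"
  have "\<bar>inner x (X *v x)\<bar> \<le> norm x * norm (X *v x)" by (rule Cauchy_Schwarz_ineq2)
  also have "\<dots> \<le> norm x * (norm X * norm x)" by (intro mult_left_mono norm_mv) simp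
  also have "\<dots> < norm x * (1 * norm x)" using x assms(2) by (intro mult_strict_left_mono mult_strict_right_mono) auto
  finally have "\<bar>inner x (X *v x)\<bar> < inner x x" by (simp add: dot_square_norm power2_eq_square)
  then show "0 < inner x ((mat 1 + X) *v x)"
    by (simp add: matrix_vector_mult_add_rdistrib inner_add_right)
qed

lemma pd_sqrt_scaled:
  fixes A :: "real^'n^'n"
  assumes As: "transpose A = A" and t: "t > 0" and En: "norm ((1/t) *\<^sub>R A - mat 1) \<le> 1/8"
  shows "\<exists>X. transpose X = X \<and> norm X \<le> 2 * norm ((1/t) *\<^sub>R A - mat 1) \<and> norm X \<le> 1/4
          \<and> pd_sqrt A = sqrt t *\<^sub>R (mat 1 + X) \<and> pos_def_mat (mat 1 + X) \<and> pos_def_mat (pd_sqrt A)"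
proof -
  define E where "E = (1/t) *\<^sub>R A - mat 1"
  have Es: "transpose E = E" unfolding E_def using As by (simp add: transpose_def vec_eq_iff mat_def)
  obtain X where X: "transpose X = X" "norm X \<le> 2 * norm E" "norm X \<le> 1/4"
    "(mat 1 + X) ** (mat 1 + X) = mat 1 + E"
    using sqrt_near_id[OF Es] En unfolding E_def by blast
  define R where "R = mat 1 + X"
  have Rpd: "pos_def_mat R" unfolding R_def by (rule pd_near_id) (use X in auto)
  define S where "S = sqrt t *\<^sub>R R"
  have Spd: "pos_def_mat S"
    using Rpd t unfolding S_def pos_def_mat_def
    by (auto simp: transpose_def vec_eq_iff scaleR_matrix_vector_assoc[symmetric] inner_scaleR_right)
  have SS: "S ** S = A"
  proof -
    have "S ** S = (sqrt t * sqrt t) *\<^sub>R (R ** R)"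
      unfolding S_def by (simp add: scalar_matrix_assoc[symmetric] matrix_scalar_ac)
    also have "\<dots> = t *\<^sub>R (mat 1 + E)" using t X(4) unfolding R_def by simp
    also have "\<dots> = A" unfolding E_def using t by (simp add: algebra_simps)
    finally show ?thesis .
  qed
  have "pd_sqrt A = S"
    unfolding pd_sqrt_def
  proof (rule the_equality)
    show "pos_def_mat S \<and> S ** S = A" using Spd SS by simp
    fix R' assume "pos_def_mat R' \<and> R' ** R' = A"
    then show "R' = S" using pd_sqrt_unique[of R' S] Spd SS by simp
  qed
  then show ?thesis using X Rpd Spd unfolding S_def R_def E_def by auto
qed

lemma thick_intro:
  fixes b e :: "'a::real_normed_vector"
  assumes "b \<in> B" "norm e \<le> r"
  shows "b + e \<in> ball_thicken B r"
  unfolding ball_thicken_def using assms by fastforce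

lemma thick_intro':
  fixes b k :: "'a::real_normed_vector"
  assumes "b \<in> B" "norm (k - b) \<le> r"
  shows "k \<in> ball_thicken B r"
  using thick_intro[OF assms] by simp

lemma thick_mem:
  fixes k :: "real^'d"
  assumes "norm k \<le> c + \<eta>" "0 \<le> c" "0 \<le> \<eta>"
  shows "k \<in> ball_thicken (cball 0 c) \<eta>"
proof (cases "norm k \<le> c")
  case True
  have "k \<in> cball 0 c" using True by auto
  then show ?thesis using assms by (intro thick_intro') auto
next
  case False
  define b where "b = (c / norm k) *\<^sub>R k"
  have nk: "0 < norm k" using False assms by linarith
  have nb: "norm b = c" unfolding b_def using nk assms by simp
  have "k - b = (1 - c / norm k) *\<^sub>R k" unfolding b_def by (simp add: algebra_simps)
  then have "norm (k - b) = (1 - c / norm k) * norm k" using False nk by simp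
  also have "\<dots> = norm k - c" using nk by (simp add: field_simps)
  finally have "norm (k - b) \<le> \<eta>" using assms by simp
  moreover have "b \<in> cball 0 c" using nb by auto
  ultimately show ?thesis by (intro thick_intro')
qed

lemma hd_le:
  fixes K B :: "'a::real_normed_vector set"
  assumes "K \<subseteq> ball_thicken B \<eta>" "B \<subseteq> ball_thicken K \<eta>" "0 \<le> \<eta>"
  shows "0 \<le> hausdorff_dist K B \<and> hausdorff_dist K B \<le> \<eta>"
proof -
  let ?S1 = "{r. r \<ge> 0 \<and> K \<subseteq> ball_thicken B r}"
  let ?S2 = "{r. r \<ge> 0 \<and> B \<subseteq> ball_thicken K r}"
  have m1: "\<eta> \<in> ?S1" and m2: "\<eta> \<in> ?S2" using assms by auto
  have b1: "bdd_below ?S1" and b2: "bdd_below ?S2" by (auto intro!: bdd_belowI[of _ 0])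
  have "Inf ?S1 \<le> \<eta>" by (rule cInf_lower[OF m1 b1])
  moreover have "Inf ?S2 \<le> \<eta>" by (rule cInf_lower[OF m2 b2])
  moreover have "0 \<le> Inf ?S1" using m1 by (intro cInf_greatest) auto
  moreover have "0 \<le> Inf ?S2" using m2 by (intro cInf_greatest) auto
  ultimately show ?thesis unfolding hausdorff_dist_def by simp
qed

lemma abs_sgn_le1: "\<bar>sgn (x::real)\<bar> \<le> 1"
  by (simp add: sgn_if)

lemma sgn_mult_self_abs: "sgn (x::real) * x = \<bar>x\<bar>"
  by (cases "x < 0") (auto simp: sgn_if)

lemma geom:
  fixes g :: "'d::finite \<Rightarrow> nat \<Rightarrow> 'w \<Rightarrow> real" and X :: "real^'d^'d"
  assumes n: "0 < n"
    and c: "0 < c"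
    and unif: "\<And>\<theta>::real^'d. \<bar>(\<Sum>j<n. \<bar>\<Sum>i\<in>UNIV. \<theta>$i * g i j \<omega>\<bar>) / real n - c * norm \<theta>\<bar> \<le> \<epsilon> * norm \<theta>"
    and Ssq: "pd_sqrt (GGt g n \<omega>) = sqrt (real n) *\<^sub>R (mat 1 + X)"
    and Spd: "pos_def_mat (pd_sqrt (GGt g n \<omega>))"
    and Xs: "transpose X = X" and Xn: "norm X \<le> \<delta>" and d1: "\<delta> < 1" and d0: "0 \<le> \<delta>"
    and e0: "0 \<le> \<epsilon>" and ec: "\<epsilon> \<le> c"
    and p1: "(c + \<epsilon>) / (1 - \<delta>) \<le> c + \<eta>" and p2: "c - (c - \<epsilon>)/(1 + \<delta>) \<le> \<eta>/2" and eta: "0 < \<eta>"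
  shows "(\<lambda>x. (1 / sqrt (real n)) *\<^sub>R I_star g n \<omega> x) ` cube n \<subseteq> ball_thicken (cball 0 c) \<eta>"
    and "cball 0 c \<subseteq> ball_thicken ((\<lambda>x. (1 / sqrt (real n)) *\<^sub>R I_star g n \<omega> x) ` cube n) \<eta>"
proof -
  define S where "S = pd_sqrt (GGt g n \<omega>)"
  define T where "T = matrix_inv S"
  define R where "R = mat 1 + X"
  define t where "t = real n"
  define st where "st = sqrt t"
  define Gm where "Gm x = G_map g n \<omega> x" for x
  define f where "f x = (1 / sqrt (real n)) *\<^sub>R I_star g n \<omega> x" for x
  define K where "K = f ` cube n"
  define h where "h \<theta> = (\<Sum>j<n. \<bar>\<Sum>i\<in>UNIV. \<theta>$i * g i j \<omega>\<bar>) / real n" for \<theta> :: "real^'d"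
  have t0: "0 < t" unfolding t_def using n by simp
  have st0: "0 < st" unfolding st_def using t0 by simp
  have stst: "st * st = t" unfolding st_def using t0 by simp
  have ST: "S ** T = mat 1" unfolding T_def S_def by (rule pd_right_inverse[OF Spd])
  have SR: "S = st *\<^sub>R R" unfolding S_def R_def st_def t_def by (rule Ssq)
  have RT: "R *v (T *v v) = (1 / st) *\<^sub>R v" for v
  proof -
    have "v = S *v (T *v v)" by (simp add: matrix_vector_mul_assoc ST)
    also have "\<dots> = st *\<^sub>R (R *v (T *v v))" unfolding SR by (simp add: scaleR_matrix_vector_assoc)
    finally have "(1 / st) *\<^sub>R v = (1 / st) *\<^sub>R (st *\<^sub>R (R *v (T *v v)))" by simp
    then show ?thesis using st0 by simp
  qed
  have Rf: "R *v f x = (1 / t) *\<^sub>R Gm x" for x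
  proof -
    have "R *v f x = (1 / st) *\<^sub>R (R *v (T *v Gm x))"
      unfolding f_def I_star_def Gm_def S_def[symmetric] T_def[symmetric] st_def t_def
      by (simp add: matrix_vector_mult_scaleR)
    also have "\<dots> = (1 / t) *\<^sub>R Gm x" using stst st0 by (simp add: RT field_simps)
    finally show ?thesis .
  qed
  have Rw: "R *v (st *\<^sub>R (T *v a)) = a" for a
    using st0 by (simp add: matrix_vector_mult_scaleR RT)
  have Rs: "transpose R = R" unfolding R_def using Xs by (simp add: transpose_def vec_eq_iff mat_def)
  have Xu: "norm (X *v u) \<le> \<delta> * norm u" for u
    using norm_mv[of X u] Xn by (meson mult_right_mono norm_ge_zero order_trans)
  have Rlow: "(1 - \<delta>) * norm u \<le> norm (R *v u)" for u
  proof -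
    have "R *v u = u + X *v u" unfolding R_def by (simp add: matrix_vector_mult_add_rdistrib)
    then have "norm u - norm (X *v u) \<le> norm (R *v u)" by (metis norm_diff_ineq norm_minus_cancel diff_minus_eq_add)
    then show ?thesis using Xu[of u] by (simp add: algebra_simps)
  qed
  have Rup: "norm (R *v u) \<le> (1 + \<delta>) * norm u" for u
  proof -
    have "R *v u = u + X *v u" unfolding R_def by (simp add: matrix_vector_mult_add_rdistrib)
    then have "norm (R *v u) \<le> norm u + norm (X *v u)" by (metis norm_triangle_ineq)
    then show ?thesis using Xu[of u] by (simp add: algebra_simps)
  qed
  have innerG: "inner y (Gm x) = (\<Sum>j<n. x j * (\<Sum>i\<in>UNIV. y$i * g i j \<omega>))" for y x
    unfolding Gm_def G_map_def inner_vec_def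
    by (simp add: sum_distrib_left sum_distrib_right mult_ac) (rule sum.swap)
  have innerG_le: "inner y (Gm x) \<le> (\<Sum>j<n. \<bar>\<Sum>i\<in>UNIV. y$i * g i j \<omega>\<bar>)" if x: "x \<in> cube n" for y x
  proof -
    have "inner y (Gm x) \<le> (\<Sum>j<n. \<bar>x j * (\<Sum>i\<in>UNIV. y$i * g i j \<omega>)\<bar>)"
      unfolding innerG by (rule sum_mono) simp
    also have "\<dots> \<le> (\<Sum>j<n. \<bar>\<Sum>i\<in>UNIV. y$i * g i j \<omega>\<bar>)"
    proof (rule sum_mono)
      fix j assume "j \<in> {..<n}"
      then have "\<bar>x j\<bar> \<le> 1" using x by (simp add: cube_def)
      then show "\<bar>x j * (\<Sum>i\<in>UNIV. y$i * g i j \<omega>)\<bar> \<le> \<bar>\<Sum>i\<in>UNIV. y$i * g i j \<omega>\<bar>"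
        by (simp add: abs_mult mult_left_le_one_le)
    qed
    finally show ?thesis .
  qed
  have hunif: "h \<theta> \<le> (c + \<epsilon>) * norm \<theta>" "(c - \<epsilon>) * norm \<theta> \<le> h \<theta>" for \<theta>
    using unif[of \<theta>] unfolding h_def by (auto simp: algebra_simps abs_le_iff)
  show "(\<lambda>x. (1 / sqrt (real n)) *\<^sub>R I_star g n \<omega> x) ` cube n \<subseteq> ball_thicken (cball 0 c) \<eta>"
  proof
    fix k assume "k \<in> (\<lambda>x. (1 / sqrt (real n)) *\<^sub>R I_star g n \<omega> x) ` cube n"
    then obtain x where x: "x \<in> cube n" and k: "k = f x" unfolding f_def by auto
    define y where "y = (1 / t) *\<^sub>R Gm x"
    have "(norm y)^2 = (1 / t) * inner y (Gm x)"
      unfolding y_def power2_norm_eq_inner by simp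
    also have "\<dots> \<le> (1 / t) * (\<Sum>j<n. \<bar>\<Sum>i\<in>UNIV. y$i * g i j \<omega>\<bar>)"
      using t0 innerG_le[OF x, of y] by (intro mult_left_mono) auto
    also have "\<dots> = h y" unfolding h_def t_def by simp
    also have "\<dots> \<le> (c + \<epsilon>) * norm y" by (rule hunif)
    finally have "(norm y)^2 \<le> (c + \<epsilon>) * norm y" .
    then have ny: "norm y \<le> c + \<epsilon>"
      by (cases "norm y = 0") (use c e0 in \<open>auto simp: power2_eq_square\<close>)
    have "(1 - \<delta>) * norm k \<le> norm y" using Rlow[of k] unfolding k Rf y_def .
    then have "(1 - \<delta>) * norm k \<le> c + \<epsilon>" using ny by linarith
    then have "norm k \<le> (c + \<epsilon>) / (1 - \<delta>)" using d1 by (simp add: field_simps)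
    then have "norm k \<le> c + \<eta>" using p1 by linarith
    then show "k \<in> ball_thicken (cball 0 c) \<eta>" by (rule thick_mem) (use c eta in auto)
  qed
  define r where "r = (c - \<epsilon>) / (1 + \<delta>)"
  have r0: "0 \<le> r" unfolding r_def using ec d0 by simp
  have rc: "r \<le> c" unfolding r_def using ec d0 e0 c by (simp add: field_simps)
  have convK: "convex K"
    unfolding K_def
  proof (rule convexI)
    fix k1 k2 :: "real^'d" and u v :: real
    assume k1: "k1 \<in> f ` cube n" and k2: "k2 \<in> f ` cube n" and uv: "0 \<le> u" "0 \<le> v" "u + v = 1"
    obtain x1 where x1: "x1 \<in> cube n" "k1 = f x1" using k1 by auto
    obtain x2 where x2: "x2 \<in> cube n" "k2 = f x2" using k2 by auto
    define x3 where "x3 j = u * x1 j + v * x2 j" for j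
    have "x3 \<in> cube n"
      unfolding cube_def
    proof safe
      fix j assume "j < n"
      then have "\<bar>x1 j\<bar> \<le> 1" "\<bar>x2 j\<bar> \<le> 1" using x1 x2 by (auto simp: cube_def)
      then have "\<bar>u * x1 j\<bar> \<le> u" "\<bar>v * x2 j\<bar> \<le> v" using uv by (auto simp: abs_mult mult_left_le)
      then show "\<bar>x3 j\<bar> \<le> 1" unfolding x3_def using uv by linarith
    next
      fix j assume "n \<le> j"
      then show "x3 j = 0" using x1 x2 by (auto simp: cube_def x3_def)
    qed
    moreover have "f x3 = u *\<^sub>R k1 + v *\<^sub>R k2"
    proof -
      have "G_map g n \<omega> x3 = u *\<^sub>R G_map g n \<omega> x1 + v *\<^sub>R G_map g n \<omega> x2"
        unfolding G_map_def x3_def by (simp add: vec_eq_iff sum_distrib_left sum.distrib algebra_simps)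
      then show ?thesis unfolding x1(2) x2(2) f_def I_star_def
        by (simp add: matrix_vector_right_distrib matrix_vector_mult_scaleR algebra_simps)
    qed
    ultimately show "u *\<^sub>R k1 + v *\<^sub>R k2 \<in> f ` cube n" by (metis image_eqI)
  qed
  have inK: "cball 0 r \<subseteq> closure K"
  proof
    fix p :: "real^'d" assume p: "p \<in> cball 0 r"
    show "p \<in> closure K"
    proof (rule ccontr)
      assume np: "p \<notin> closure K"
      obtain a b where ab: "inner a p < b" "\<forall>z\<in>closure K. b < inner a z"
        using separating_hyperplane_closed_point[OF convex_closure[OF convK] closed_closure np] by blast
      define w where "w = st *\<^sub>R (T *v (- a))"
      have Rw': "R *v w = - a" unfolding w_def by (rule Rw)
      define x0 where "x0 j = (if j < n then sgn (\<Sum>i\<in>UNIV. w$i * g i j \<omega>) else 0)" for j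
      have x0c: "x0 \<in> cube n" unfolding cube_def x0_def by (simp add: abs_sgn_le1)
      define k where "k = f x0"
      have "k \<in> K" unfolding k_def K_def using x0c by (rule imageI)
      then have kK: "k \<in> closure K" by (rule closure_subset[THEN subsetD])
      have ig: "inner w (Gm x0) = (\<Sum>j<n. \<bar>\<Sum>i\<in>UNIV. w$i * g i j \<omega>\<bar>)"
        unfolding innerG x0_def by (rule sum.cong) (simp_all add: sgn_mult_self_abs)
      have "inner (- a) k = inner w (R *v k)" unfolding Rw'[symmetric] by (rule sym_inner[OF Rs])
      also have "\<dots> = (1 / t) * inner w (Gm x0)" unfolding k_def Rf by simp
      also have "\<dots> = (1 / t) * (\<Sum>j<n. \<bar>\<Sum>i\<in>UNIV. w$i * g i j \<omega>\<bar>)" unfolding ig ..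
      also have "\<dots> = h w" unfolding h_def t_def by simp
      finally have e1: "inner (- a) k = h w" .
      have "norm a \<le> (1 + \<delta>) * norm w" using Rup[of w] unfolding Rw' by simp
      then have "r * norm a \<le> r * ((1 + \<delta>) * norm w)" using r0 by (rule mult_left_mono)
      also have "\<dots> = (c - \<epsilon>) * norm w" unfolding r_def using d0 by (simp add: field_simps)
      also have "\<dots> \<le> h w" by (rule hunif)
      finally have e2: "r * norm a \<le> inner (- a) k" using e1 by simp
      have "inner (- a) p \<le> norm a * norm p" using norm_cauchy_schwarz[of "- a" p] by simp
      also have "\<dots> \<le> norm a * r" using p by (intro mult_left_mono) auto
      finally have "inner (- a) p \<le> inner (- a) k" using e2 by (simp add: mult.commute)
      then have "inner a k \<le> inner a p" by simp
      moreover have "b < inner a k" using ab(2) kK by (rule bspec)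
      ultimately show False using ab(1) by linarith
    qed
  qed
  show "cball 0 c \<subseteq> ball_thicken ((\<lambda>x. (1 / sqrt (real n)) *\<^sub>R I_star g n \<omega> x) ` cube n) \<eta>"
  proof
    fix p :: "real^'d" assume p: "p \<in> cball 0 c"
    define p' where "p' = (r / c) *\<^sub>R p"
    have "norm p' \<le> r"
    proof -
      have rc0: "0 \<le> r / c" using r0 c by simp
      have np: "norm p \<le> c" using p by simp
      have "norm p' = (r / c) * norm p" unfolding p'_def using r0 c by simp
      also have "\<dots> \<le> (r / c) * c" using np rc0 by (rule mult_left_mono)
      also have "\<dots> = r" using c by simp
      finally show ?thesis .
    qed
    then have "p' \<in> closure K" using inK by auto
    then obtain k where k: "k \<in> K" "dist k p' < \<eta> / 2"
      using eta closure_approachable[of p' K] by (meson half_gt_zero)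
    have "norm (p - p') = (1 - r / c) * norm p"
    proof -
      have "p - p' = (1 - r / c) *\<^sub>R p" unfolding p'_def by (simp add: algebra_simps)
      then show ?thesis using rc c by simp
    qed
    also have "\<dots> \<le> (1 - r / c) * c" using p rc c by (intro mult_left_mono) (auto simp: field_simps)
    also have "\<dots> = c - r" using c by (simp add: field_simps)
    finally have d1': "norm (p - p') \<le> c - r" .
    have "norm (p - k) \<le> norm (p - p') + norm (p' - k)" using norm_triangle_ineq[of "p - p'" "p' - k"] by simp
    also have "\<dots> \<le> (c - r) + \<eta> / 2" using d1' k(2) by (simp add: dist_norm norm_minus_commute)
    also have "\<dots> \<le> \<eta>" using p2 unfolding r_def by linarith
    finally have "norm (p - k) \<le> \<eta>" .
    then show "p \<in> ball_thicken ((\<lambda>x. (1 / sqrt (real n)) *\<^sub>R I_star g n \<omega> x) ` cube n) \<eta>"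
      using k(1) unfolding K_def f_def by (intro thick_intro') auto
  qed
qed

lemma axis_sum: "(\<Sum>i'\<in>UNIV. axis i (1::real) $ i' * f i') = f i"
proof -
  have "(\<Sum>i'\<in>UNIV. axis i (1::real) $ i' * f i') = (\<Sum>i'\<in>UNIV. if i' = i then f i' else 0)"
    by (rule sum.cong) (auto simp: axis_def)
  then show ?thesis by simp
qed

lemma entry_conv:
  fixes a :: "'d::finite \<Rightarrow> nat \<Rightarrow> real"
  assumes H2: "\<And>\<theta>. \<theta> \<in> D \<Longrightarrow> (\<lambda>n. (\<Sum>j<n. (\<Sum>i\<in>UNIV. \<theta>$i * a i j)^2) / real n) \<longlonglongrightarrow> (norm \<theta>)^2"
    and ax: "\<And>i. axis i 1 \<in> D" and ax2: "\<And>i k. axis i 1 + axis k 1 \<in> D"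
  shows "(\<lambda>n. (\<Sum>j<n. a i j * a k j) / real n) \<longlonglongrightarrow> (if i = k then 1 else 0)"
proof -
  have d: "(\<lambda>n. (\<Sum>j<n. (a i j)^2) / real n) \<longlonglongrightarrow> 1" for i
    using H2[OF ax[of i]] by (simp add: axis_sum)
  show ?thesis
  proof (cases "i = k")
    case True
    then show ?thesis using d[of i] by (simp add: power2_eq_square)
  next
    case False
    have s: "(\<Sum>i'\<in>UNIV. (axis i 1 + axis k 1) $ i' * a i' j) = a i j + a k j" for j
      by (simp add: distrib_right sum.distrib axis_sum)
    have nrm: "(norm (axis i (1::real) + axis k 1))^2 = 2"
    proof -
      have "(norm (axis i (1::real) + axis k 1))^2 = inner (axis i 1 + axis k 1) (axis i (1::real) + axis k 1)"
        by (simp add: power2_norm_eq_inner)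
      also have "\<dots> = 2" using False by (simp add: inner_add_left inner_add_right inner_axis_axis)
      finally show ?thesis .
    qed
    have l2: "(\<lambda>n. (\<Sum>j<n. (a i j + a k j)^2) / real n) \<longlonglongrightarrow> 2"
      using H2[OF ax2[of i k]] unfolding s nrm .
    have "(\<lambda>n. ((\<Sum>j<n. (a i j + a k j)^2) / real n - (\<Sum>j<n. (a i j)^2) / real n - (\<Sum>j<n. (a k j)^2) / real n) / 2)
          \<longlonglongrightarrow> (2 - 1 - 1) / 2"
      by (intro tendsto_intros l2 d) simp
    moreover have "((\<Sum>j<n. (a i j + a k j)^2) / real n - (\<Sum>j<n. (a i j)^2) / real n - (\<Sum>j<n. (a k j)^2) / real n) / 2
          = (\<Sum>j<n. a i j * a k j) / real n" for n
    proof -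
      have "(\<Sum>j<n. (a i j + a k j)^2) = (\<Sum>j<n. (a i j)^2) + (\<Sum>j<n. (a k j)^2) + 2 * (\<Sum>j<n. a i j * a k j)"
        by (simp add: power2_sum sum.distrib sum_distrib_left mult.assoc)
      then show ?thesis by (simp add: add_divide_distrib)
    qed
    ultimately show ?thesis using False by simp
  qed
qed

lemma unif_conv:
  fixes a :: "'d::finite \<Rightarrow> nat \<Rightarrow> real" and D :: "(real^'d) set"
  assumes H1: "\<And>\<theta>. \<theta> \<in> D \<Longrightarrow> (\<lambda>n. (\<Sum>j<n. \<bar>\<Sum>i\<in>UNIV. \<theta>$i * a i j\<bar>) / real n) \<longlonglongrightarrow> norm \<theta> * c"
    and dense: "\<And>\<theta> e. 0 < e \<Longrightarrow> \<exists>q\<in>D. dist \<theta> q < e"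
    and ax: "\<And>i. axis i 1 \<in> D"
    and c: "0 < c" and e: "0 < \<epsilon>"
  shows "eventually (\<lambda>n. \<forall>\<theta>::real^'d. \<bar>(\<Sum>j<n. \<bar>\<Sum>i\<in>UNIV. \<theta>$i * a i j\<bar>) / real n - c * norm \<theta>\<bar> \<le> \<epsilon> * norm \<theta>) sequentially"
proof -
  define h where "h n \<theta> = (\<Sum>j<n. \<bar>\<Sum>i\<in>UNIV. \<theta>$i * a i j\<bar>) / real n" for n and \<theta> :: "real^'d"
  define Bn where "Bn n = (\<Sum>i\<in>UNIV. (\<Sum>j<n. \<bar>a i j\<bar>) / real n)" for n
  define Bb where "Bb = real CARD('d) * c + 1"
  have Bn_lim: "Bn \<longlonglongrightarrow> (\<Sum>i\<in>(UNIV::'d set). c)"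
    unfolding Bn_def
  proof (intro tendsto_sum)
    fix i :: 'd
    show "(\<lambda>n. (\<Sum>j<n. \<bar>a i j\<bar>) / real n) \<longlonglongrightarrow> c"
      using H1[OF ax[of i]] by (simp add: axis_sum)
  qed
  have evB: "eventually (\<lambda>n. Bn n \<le> Bb) sequentially"
  proof -
    have "(\<Sum>i\<in>(UNIV::'d set). c) < Bb" unfolding Bb_def by simp
    from order_tendstoD(2)[OF Bn_lim this] show ?thesis by eventually_elim simp
  qed
  have Bb0: "0 < Bb" unfolding Bb_def using c by (simp add: add_nonneg_pos)
  have lip: "\<bar>h n \<theta> - h n q\<bar> \<le> norm (\<theta> - q) * Bn n" if n: "0 < n" for n \<theta> q
  proof -
    have "\<bar>(\<Sum>j<n. \<bar>\<Sum>i\<in>UNIV. \<theta>$i * a i j\<bar>) - (\<Sum>j<n. \<bar>\<Sum>i\<in>UNIV. q$i * a i j\<bar>)\<bar>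
        \<le> (\<Sum>j<n. \<bar>\<bar>\<Sum>i\<in>UNIV. \<theta>$i * a i j\<bar> - \<bar>\<Sum>i\<in>UNIV. q$i * a i j\<bar>\<bar>)"
      unfolding sum_subtractf[symmetric] by (rule sum_abs)
    also have "\<dots> \<le> (\<Sum>j<n. \<Sum>i\<in>UNIV. norm (\<theta> - q) * \<bar>a i j\<bar>)"
    proof (rule sum_mono)
      fix j
      have "\<bar>\<bar>\<Sum>i\<in>UNIV. \<theta>$i * a i j\<bar> - \<bar>\<Sum>i\<in>UNIV. q$i * a i j\<bar>\<bar> \<le> \<bar>(\<Sum>i\<in>UNIV. \<theta>$i * a i j) - (\<Sum>i\<in>UNIV. q$i * a i j)\<bar>"
        by (rule abs_triangle_ineq3)
      also have "\<dots> = \<bar>\<Sum>i\<in>UNIV. (\<theta> - q)$i * a i j\<bar>"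
        by (simp add: sum_subtractf[symmetric] left_diff_distrib)
      also have "\<dots> \<le> (\<Sum>i\<in>UNIV. \<bar>(\<theta> - q)$i * a i j\<bar>)" by (rule sum_abs)
      also have "\<dots> \<le> (\<Sum>i\<in>UNIV. norm (\<theta> - q) * \<bar>a i j\<bar>)"
      proof (rule sum_mono)
        fix i
        have "\<bar>(\<theta> - q)$i\<bar> \<le> norm (\<theta> - q)" by (rule component_le_norm_cart)
        then show "\<bar>(\<theta> - q)$i * a i j\<bar> \<le> norm (\<theta> - q) * \<bar>a i j\<bar>"
          by (simp add: abs_mult mult_right_mono)
      qed
      finally show "\<bar>\<bar>\<Sum>i\<in>UNIV. \<theta>$i * a i j\<bar> - \<bar>\<Sum>i\<in>UNIV. q$i * a i j\<bar>\<bar> \<le> (\<Sum>i\<in>UNIV. norm (\<theta> - q) * \<bar>a i j\<bar>)" .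
    qed
    also have "\<dots> = norm (\<theta> - q) * (\<Sum>i\<in>UNIV. \<Sum>j<n. \<bar>a i j\<bar>)"
      by (simp add: sum_distrib_left) (rule sum.swap)
    finally have *: "\<bar>(\<Sum>j<n. \<bar>\<Sum>i\<in>UNIV. \<theta>$i * a i j\<bar>) - (\<Sum>j<n. \<bar>\<Sum>i\<in>UNIV. q$i * a i j\<bar>)\<bar>
        \<le> norm (\<theta> - q) * (\<Sum>i\<in>UNIV. \<Sum>j<n. \<bar>a i j\<bar>)" .
    have "\<bar>h n \<theta> - h n q\<bar> = \<bar>(\<Sum>j<n. \<bar>\<Sum>i\<in>UNIV. \<theta>$i * a i j\<bar>) - (\<Sum>j<n. \<bar>\<Sum>i\<in>UNIV. q$i * a i j\<bar>)\<bar> / real n"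
      unfolding h_def using n by (simp add: diff_divide_distrib[symmetric])
    also have "\<dots> \<le> norm (\<theta> - q) * (\<Sum>i\<in>UNIV. \<Sum>j<n. \<bar>a i j\<bar>) / real n"
      using * n by (intro divide_right_mono) auto
    also have "\<dots> = norm (\<theta> - q) * Bn n" unfolding Bn_def sum_divide_distrib[symmetric] by (simp only: times_divide_eq_right)
    finally show ?thesis .
  qed
  have hom: "h n (r *\<^sub>R \<theta>) = \<bar>r\<bar> * h n \<theta>" for n r \<theta>
  proof -
    have "(\<Sum>j<n. \<bar>\<Sum>i\<in>UNIV. (r *\<^sub>R \<theta>)$i * a i j\<bar>) = (\<Sum>j<n. \<bar>r\<bar> * \<bar>\<Sum>i\<in>UNIV. \<theta>$i * a i j\<bar>)"
      by (simp add: sum_distrib_left[symmetric] mult.assoc abs_mult)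
    then show ?thesis unfolding h_def by (simp add: sum_distrib_left[symmetric])
  qed
  define \<delta> where "\<delta> = \<epsilon> / (2 * (Bb + c))"
  have \<delta>0: "0 < \<delta>" unfolding \<delta>_def using e Bb0 c by simp
  have cover: "sphere (0::real^'d) 1 \<subseteq> \<Union> ((\<lambda>q. ball q \<delta>) ` D)"
  proof
    fix u :: "real^'d" assume "u \<in> sphere 0 1"
    obtain q where "q \<in> D" "dist u q < \<delta>" using dense[OF \<delta>0] by blast
    then show "u \<in> \<Union> ((\<lambda>q. ball q \<delta>) ` D)" by (auto simp: dist_commute)
  qed
  obtain F where F: "F \<subseteq> D" "finite F" "sphere (0::real^'d) 1 \<subseteq> \<Union> ((\<lambda>q. ball q \<delta>) ` F)"
    using compactE_image[OF compact_sphere, of D "\<lambda>q. ball q \<delta>"] cover by blast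
  have evF: "eventually (\<lambda>n. \<forall>q\<in>F. \<bar>h n q - norm q * c\<bar> < \<epsilon> / 2) sequentially"
  proof (rule eventually_ball_finite[OF F(2)], rule ballI)
    fix q assume "q \<in> F"
    then have "(\<lambda>n. h n q) \<longlonglongrightarrow> norm q * c" unfolding h_def using H1 F(1) by blast
    moreover have "0 < \<epsilon> / 2" using e by simp
    ultimately have "eventually (\<lambda>n. dist (h n q) (norm q * c) < \<epsilon> / 2) sequentially"
      unfolding tendsto_iff by blast
    then show "eventually (\<lambda>n. \<bar>h n q - norm q * c\<bar> < \<epsilon> / 2) sequentially" by (simp add: dist_real_def)
  qed
  have evn: "eventually (\<lambda>n. 0 < n) sequentially" by (rule eventually_gt_at_top)
  have "eventually (\<lambda>n. \<forall>\<theta>::real^'d. \<bar>h n \<theta> - c * norm \<theta>\<bar> \<le> \<epsilon> * norm \<theta>) sequentially"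
    using evF evB evn
  proof eventually_elim
    case (elim n)
    show ?case
    proof
      fix \<theta> :: "real^'d"
      show "\<bar>h n \<theta> - c * norm \<theta>\<bar> \<le> \<epsilon> * norm \<theta>"
      proof (cases "\<theta> = 0")
        case True
        then show ?thesis by (simp add: h_def)
      next
        case False
        define u where "u = (1 / norm \<theta>) *\<^sub>R \<theta>"
        have nt: "0 < norm \<theta>" using False by simp
        have nu: "norm u = 1" unfolding u_def using nt by simp
        then have "u \<in> sphere 0 1" by simp
        then obtain q where q: "q \<in> F" "dist q u < \<delta>" using F(3) by auto
        have B: "Bn n \<le> Bb" using elim by simp
        have Bn0: "0 \<le> Bn n" unfolding Bn_def by (intro sum_nonneg divide_nonneg_nonneg sum_nonneg) auto
        have "\<bar>h n u - h n q\<bar> \<le> norm (u - q) * Bn n" by (rule lip) (use elim in simp)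
        also have "\<dots> \<le> \<delta> * Bn n"
        proof (rule mult_right_mono)
          show "norm (u - q) \<le> \<delta>" using q(2) by (simp add: dist_norm norm_minus_commute)
        qed (rule Bn0)
        also have "\<dots> \<le> \<delta> * Bb" using B \<delta>0 by (intro mult_left_mono) auto
        finally have a1: "\<bar>h n u - h n q\<bar> \<le> \<delta> * Bb" .
        have a2: "\<bar>h n q - norm q * c\<bar> < \<epsilon> / 2" using elim q(1) by blast
        have "\<bar>norm q - norm u\<bar> \<le> norm (q - u)" by (rule norm_triangle_ineq3)
        then have "\<bar>norm q - 1\<bar> \<le> \<delta>" using q(2) nu by (simp add: dist_norm)
        then have a3: "\<bar>norm q * c - c\<bar> \<le> \<delta> * c"
        proof -
          assume h: "\<bar>norm q - 1\<bar> \<le> \<delta>"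
          have "norm q * c - c = (norm q - 1) * c" by (simp add: algebra_simps)
          then have "\<bar>norm q * c - c\<bar> = \<bar>norm q - 1\<bar> * c" using c by (simp add: abs_mult)
          also have "\<dots> \<le> \<delta> * c" using h c by (intro mult_right_mono) auto
          finally show ?thesis .
        qed
        have "\<bar>h n u - c\<bar> \<le> \<delta> * Bb + \<epsilon> / 2 + \<delta> * c" using a1 a2 a3 by linarith
        moreover have "\<delta> * Bb + \<delta> * c = \<epsilon> / 2"
        proof -
          have pos: "0 < Bb + c" using Bb0 c by simp
          have "\<delta> * Bb + \<delta> * c = \<delta> * (Bb + c)" by (simp add: algebra_simps)
          also have "\<dots> = \<epsilon> / 2" unfolding \<delta>_def using pos by (simp add: field_simps)
          finally show ?thesis .
        qed
        ultimately have hu: "\<bar>h n u - c\<bar> \<le> \<epsilon>" by linarith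
        have "\<theta> = norm \<theta> *\<^sub>R u" unfolding u_def using nt by simp
        then have "h n \<theta> = norm \<theta> * h n u" using hom[of n "norm \<theta>" u] by simp
        then have "\<bar>h n \<theta> - c * norm \<theta>\<bar> = norm \<theta> * \<bar>h n u - c\<bar>"
        proof -
          assume "h n \<theta> = norm \<theta> * h n u"
          moreover have "norm \<theta> * h n u - c * norm \<theta> = norm \<theta> * (h n u - c)" by (simp add: algebra_simps)
          ultimately show ?thesis by (simp add: abs_mult)
        qed
        also have "\<dots> \<le> norm \<theta> * \<epsilon>" using hu nt by (intro mult_left_mono) auto
        finally show ?thesis by (simp add: mult.commute)
      qed
    qed
  qed
  then show ?thesis unfolding h_def .
qed

lemma params_ok:
  fixes c \<eta> :: real
  assumes c: "0 < c" and eta: "0 < \<eta>"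
  defines "\<tau> \<equiv> min (min (1/2) (c/2)) (\<eta> / (4 * (c + 1)))"
  shows "(c + \<tau>) / (1 - \<tau>) \<le> c + \<eta>" "c - (c - \<tau>) / (1 + \<tau>) \<le> \<eta> / 2"
    "0 < \<tau>" "\<tau> \<le> 1/2" "\<tau> \<le> c"
proof -
  have t1: "\<tau> \<le> 1/2" "\<tau> \<le> c/2" "\<tau> \<le> \<eta> / (4 * (c + 1))" unfolding \<tau>_def
    by (rule min.coboundedI1[OF min.cobounded1], rule min.coboundedI1[OF min.cobounded2], rule min.cobounded2)
  show t0: "0 < \<tau>" unfolding \<tau>_def using c eta by simp
  show "\<tau> \<le> 1/2" by (rule t1(1))
  show "\<tau> \<le> c" using t1(2) c by simp
  have pc: "0 < 4 * (c + 1)" using c by simp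
  have a: "\<tau> * (4 * (c + 1)) \<le> \<eta>" using t1(3) pc by (simp add: pos_le_divide_eq)
  have b: "\<eta> * \<tau> \<le> \<eta> * (1/2)" using t1(1) eta by (intro mult_left_mono) auto
  have a2: "\<tau> * (4 * (c + 1)) = 4 * \<tau> + 4 * (c * \<tau>)" by (simp add: algebra_simps)
  have b2: "\<eta> * (1/2) = \<eta> / 2" by simp
  have ex1: "(c + \<eta>) * (1 - \<tau>) = c + \<eta> - c * \<tau> - \<eta> * \<tau>" by (simp add: algebra_simps)
  have "c + \<tau> \<le> (c + \<eta>) * (1 - \<tau>)"
    unfolding ex1 using a a2 b b2 eta by linarith
  then show "(c + \<tau>) / (1 - \<tau>) \<le> c + \<eta>" using t1(1) by (simp add: pos_divide_le_eq)
  have ex2: "c * (1 + \<tau>) - (c - \<tau>) = c * \<tau> + \<tau>" by (simp add: algebra_simps)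
  have ex3: "\<eta> / 2 * (1 + \<tau>) = \<eta> / 2 + (\<eta> * \<tau>) / 2" by (simp add: algebra_simps)
  have "0 \<le> \<eta> * \<tau>" using eta t0 by simp
  then have "c * (1 + \<tau>) - (c - \<tau>) \<le> \<eta> / 2 * (1 + \<tau>)"
    unfolding ex2 ex3 using a a2 eta by linarith
  then have "c - (c - \<tau>) / (1 + \<tau>) \<le> \<eta> / 2"
    using t0 by (simp add: field_simps)
  then show "c - (c - \<tau>) / (1 + \<tau>) \<le> \<eta> / 2" .
qed

lemma main_det:
  fixes g :: "'d::finite \<Rightarrow> nat \<Rightarrow> 'w \<Rightarrow> real" and D :: "(real^'d) set" and c :: real
  assumes H1: "\<And>\<theta>. \<theta> \<in> D \<Longrightarrow> (\<lambda>n. (\<Sum>j<n. \<bar>\<Sum>i\<in>UNIV. \<theta>$i * g i j \<omega>\<bar>) / real n) \<longlonglongrightarrow> norm \<theta> * c"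
    and H2: "\<And>\<theta>. \<theta> \<in> D \<Longrightarrow> (\<lambda>n. (\<Sum>j<n. (\<Sum>i\<in>UNIV. \<theta>$i * g i j \<omega>)^2) / real n) \<longlonglongrightarrow> (norm \<theta>)^2"
    and dense: "\<And>\<theta> e. 0 < e \<Longrightarrow> \<exists>q\<in>D. dist \<theta> q < e"
    and ax: "\<And>i. axis i 1 \<in> D" and ax2: "\<And>i k. axis i 1 + axis k 1 \<in> D"
    and c: "0 < c"
  shows "(\<lambda>n. hausdorff_dist ((\<lambda>x. (1 / sqrt (real n)) *\<^sub>R I_star g n \<omega> x) ` cube n) (cball (0::real^'d) c)) \<longlonglongrightarrow> 0"
proof -
  define E where "E n = (1 / real n) *\<^sub>R GGt g n \<omega> - mat 1" for n
  have Elim: "E \<longlonglongrightarrow> 0"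
    unfolding E_def
  proof (rule vec_tendstoI, rule vec_tendstoI)
    fix i k :: 'd
    have "(\<lambda>n. (\<Sum>j<n. g i j \<omega> * g k j \<omega>) / real n) \<longlonglongrightarrow> (if i = k then 1 else 0)"
      by (rule entry_conv[where a="\<lambda>i j. g i j \<omega>", OF H2 ax ax2])
    then have "(\<lambda>n. (\<Sum>j<n. g i j \<omega> * g k j \<omega>) / real n - (if i = k then 1 else 0)) \<longlonglongrightarrow> 0"
      by (simp add: LIM_zero)
    then show "(\<lambda>n. ((1 / real n) *\<^sub>R GGt g n \<omega> - mat 1) $ i $ k) \<longlonglongrightarrow> 0 $ i $ k"
      by (simp add: GGt_def mat_def)
  qed
  have nE: "(\<lambda>n. norm (E n)) \<longlonglongrightarrow> 0" using tendsto_norm_zero[OF Elim] .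
  show ?thesis
    unfolding tendsto_iff
  proof (intro allI impI)
    fix \<eta> :: real assume eta: "0 < \<eta>"
    define \<eta>' where "\<eta>' = \<eta> / 2"
    have eta': "0 < \<eta>'" unfolding \<eta>'_def using eta by simp
    define \<tau> where "\<tau> = min (min (1/2) (c/2)) (\<eta>' / (4 * (c + 1)))"
    note par = params_ok[OF c eta', folded \<tau>_def]
    have ev1: "eventually (\<lambda>n. \<forall>\<theta>::real^'d. \<bar>(\<Sum>j<n. \<bar>\<Sum>i\<in>UNIV. \<theta>$i * g i j \<omega>\<bar>) / real n - c * norm \<theta>\<bar> \<le> \<tau> * norm \<theta>) sequentially"
      by (rule unif_conv[where a="\<lambda>i j. g i j \<omega>", OF H1 dense ax c par(3)])
    have "0 < min (1/8) (\<tau>/2)" using par(3) by simp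
    then have ev2: "eventually (\<lambda>n. norm (E n) < min (1/8) (\<tau>/2)) sequentially"
      using order_tendstoD(2)[OF nE] by blast
    have ev3: "eventually (\<lambda>n. 0 < n) sequentially" by (rule eventually_gt_at_top)
    show "eventually (\<lambda>n. dist (hausdorff_dist ((\<lambda>x. (1 / sqrt (real n)) *\<^sub>R I_star g n \<omega> x) ` cube n) (cball (0::real^'d) c)) 0 < \<eta>) sequentially"
      using ev1 ev2 ev3
    proof eventually_elim
      case (elim n)
      have As: "transpose (GGt g n \<omega>) = GGt g n \<omega>"
        by (simp add: GGt_def transpose_def vec_eq_iff mult.commute)
      have tn: "0 < real n" using elim by simp
      have En: "norm ((1 / real n) *\<^sub>R GGt g n \<omega> - mat 1) \<le> 1/8"
        using elim unfolding E_def by simp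
      obtain X where X: "transpose X = X" "norm X \<le> 2 * norm ((1 / real n) *\<^sub>R GGt g n \<omega> - mat 1)"
        "pd_sqrt (GGt g n \<omega>) = sqrt (real n) *\<^sub>R (mat 1 + X)" "pos_def_mat (pd_sqrt (GGt g n \<omega>))"
        using pd_sqrt_scaled[OF As tn En] by blast
      have Xn: "norm X \<le> \<tau>" using X(2) elim unfolding E_def by linarith
      have g1: "(\<lambda>x. (1 / sqrt (real n)) *\<^sub>R I_star g n \<omega> x) ` cube n \<subseteq> ball_thicken (cball 0 c) \<eta>'"
        and g2: "cball 0 c \<subseteq> ball_thicken ((\<lambda>x. (1 / sqrt (real n)) *\<^sub>R I_star g n \<omega> x) ` cube n) \<eta>'"
        using geom[of n c g \<omega> \<tau> X \<tau> \<eta>'] elim c X(3) X(4) X(1) Xn par eta' by auto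
      have "0 \<le> hausdorff_dist ((\<lambda>x. (1 / sqrt (real n)) *\<^sub>R I_star g n \<omega> x) ` cube n) (cball (0::real^'d) c) \<and>
            hausdorff_dist ((\<lambda>x. (1 / sqrt (real n)) *\<^sub>R I_star g n \<omega> x) ` cube n) (cball (0::real^'d) c) \<le> \<eta>'"
        by (rule hd_le[OF g1 g2]) (use eta' in simp)
      then show ?case unfolding \<eta>'_def using eta by (simp add: dist_real_def)
    qed
  qed
qed

theorem theorem1p1:
  fixes M :: "'w measure" and g :: "'d::finite \<Rightarrow> nat \<Rightarrow> 'w \<Rightarrow> real"
  assumes "prob_space M"
    and "prob_space.indep_vars M (\<lambda>_. borel) (\<lambda>(i, j). g i j) UNIV"
    and "\<And>i j. distributed M lborel (g i j) std_normal_density"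
  shows "AE \<omega> in M.
    (\<lambda>n. hausdorff_dist ((\<lambda>x. (1 / sqrt (real n)) *\<^sub>R I_star g n \<omega> x) ` cube n)
                        (cball (0::real^'d) (sqrt (2 / pi)))) \<longlonglongrightarrow> 0"
proof -
  interpret P: prob_space M by fact
  have ind: "P.indep_vars (\<lambda>_. borel) (\<lambda>(i, j). g i j) UNIV" by fact
  have gd: "\<And>i j. distributed M lborel (g i j) std_normal_density" by fact
  obtain D0 :: "(real^'d) set" where D0: "countable D0" "\<forall>X. open X \<longrightarrow> X \<noteq> {} \<longrightarrow> (\<exists>d\<in>D0. d \<in> X)"
    using countable_dense_exists by blast
  define D where "D = D0 \<union> range (\<lambda>i. axis i (1::real)) \<union> range (\<lambda>(i,k). axis i (1::real) + axis k 1)"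
  have cD: "countable D" unfolding D_def using D0(1)
    by (intro countable_Un countable_image) (auto intro: countable_finite)
  have dense: "\<exists>q\<in>D. dist \<theta> q < e" if "0 < e" for \<theta> :: "real^'d" and e :: real
  proof -
    have "ball \<theta> e \<noteq> {}" using that by simp
    then obtain d where "d \<in> D0" "d \<in> ball \<theta> e" using D0(2) by blast
    then show ?thesis unfolding D_def by auto
  qed
  have ax: "axis i 1 \<in> D" for i :: 'd unfolding D_def by auto
  have ax2: "axis i 1 + axis k 1 \<in> D" for i k :: 'd unfolding D_def by auto
  have "AE \<omega> in M. \<forall>\<theta>\<in>D. (\<lambda>n. (\<Sum>j<n. \<bar>\<Sum>i\<in>UNIV. \<theta>$i * g i j \<omega>\<bar>) / real n) \<longlonglongrightarrow> norm \<theta> * sqrt (2/pi)"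
    using P.gauss_limits(1)[OF ind gd] by (subst AE_ball_countable[OF cD]) blast
  moreover have "AE \<omega> in M. \<forall>\<theta>\<in>D. (\<lambda>n. (\<Sum>j<n. (\<Sum>i\<in>UNIV. \<theta>$i * g i j \<omega>)^2) / real n) \<longlonglongrightarrow> (norm \<theta>)^2"
    using P.gauss_limits(2)[OF ind gd] by (subst AE_ball_countable[OF cD]) blast
  ultimately show ?thesis
  proof eventually_elim
    case (elim \<omega>)
    show ?case
      by (rule main_det[where D=D]) (use elim dense ax ax2 in auto)
  qed
qed

end
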